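(* Let $\Sigma_1$ and $\Sigma_2$ be connected graphs (multiple edges allowed, no loops) with $n$ vertices each containing exactly one cycle. If $\Sigma_1^*\cong\Sigma_2^*$, then $\Sigma_1\cong\Sigma_2$.
   Context: A cycle may consist of two vertices joined by two parallel edges. For such a graph $\Sigma$, the dual graph $\Sigma^*$ has as vertices the edges of $\Sigma$; two vertices are joined by an edge if the corresponding edges have a common endpoint, except that if two edges of $\Sigma$ form a cycle (i.e., are parallel edges), the corresponding vertices of $\Sigma^*$ are joined by a dotted edge (a distinguished edge type). Isomorphisms of dual graphs preserve the edge types. *)

theory Defs
  imports Main
begin

text \<open>A finite multigraph without loops: vertex set V, edge set E (abstract edge
  identifiers, so parallel edges are allowed), and an incidence map giving each
  edge its set of two distinct endpoints.\<close>

definition multigraph :: "'v set \<Rightarrow> 'e set \<Rightarrow> ('e \<Rightarrow> 'v set) \<Rightarrow> bool" where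
  "multigraph V E ends \<longleftrightarrow> finite V \<and> finite E \<and>
     (\<forall>e\<in>E. ends e \<subseteq> V \<and> card (ends e) = 2)"

definition mg_adj :: "'e set \<Rightarrow> ('e \<Rightarrow> 'v set) \<Rightarrow> ('v \<times> 'v) set" where
  "mg_adj E ends = {(u, v). \<exists>e\<in>E. ends e = {u, v}}"

definition mg_connected :: "'v set \<Rightarrow> 'e set \<Rightarrow> ('e \<Rightarrow> 'v set) \<Rightarrow> bool" where
  "mg_connected V E ends \<longleftrightarrow> (\<forall>u\<in>V. \<forall>v\<in>V. (u, v) \<in> (mg_adj E ends)\<^sup>*)"

text \<open>A cycle is a nonempty set of edges forming a connected 2-regular subgraph
  (on the vertices it covers). Two parallel edges form a cycle of length 2.\<close>

definition mg_cycle :: "'e set \<Rightarrow> ('e \<Rightarrow> 'v set) \<Rightarrow> 'e set \<Rightarrow> bool" where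
  "mg_cycle E ends C \<longleftrightarrow> C \<subseteq> E \<and> C \<noteq> {} \<and>
     (\<forall>v\<in>\<Union>(ends ` C). card {e\<in>C. v \<in> ends e} = 2) \<and>
     mg_connected (\<Union>(ends ` C)) C ends"

definition unicyclic :: "'e set \<Rightarrow> ('e \<Rightarrow> 'v set) \<Rightarrow> bool" where
  "unicyclic E ends \<longleftrightarrow> (\<exists>!C. mg_cycle E ends C)"

text \<open>Dual graph: vertices are the edges E. Dotted edge between two distinct edges
  forming a cycle (parallel edges); ordinary edge between two distinct edges with a
  common endpoint that do not form a cycle.\<close>

definition dual_dotted :: "'e set \<Rightarrow> ('e \<Rightarrow> 'v set) \<Rightarrow> 'e \<Rightarrow> 'e \<Rightarrow> bool" where
  "dual_dotted E ends e f \<longleftrightarrow> e \<in> E \<and> f \<in> E \<and> e \<noteq> f \<and> mg_cycle E ends {e, f}"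

definition dual_solid :: "'e set \<Rightarrow> ('e \<Rightarrow> 'v set) \<Rightarrow> 'e \<Rightarrow> 'e \<Rightarrow> bool" where
  "dual_solid E ends e f \<longleftrightarrow> e \<in> E \<and> f \<in> E \<and> e \<noteq> f \<and>
     ends e \<inter> ends f \<noteq> {} \<and> \<not> mg_cycle E ends {e, f}"

definition dual_iso ::
  "'e set \<Rightarrow> ('e \<Rightarrow> 'v set) \<Rightarrow> 'f set \<Rightarrow> ('f \<Rightarrow> 'w set) \<Rightarrow> bool" where
  "dual_iso E1 ends1 E2 ends2 \<longleftrightarrow> (\<exists>\<phi>. bij_betw \<phi> E1 E2 \<and>
     (\<forall>e\<in>E1. \<forall>f\<in>E1.
        (dual_solid E1 ends1 e f \<longleftrightarrow> dual_solid E2 ends2 (\<phi> e) (\<phi> f)) \<and>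
        (dual_dotted E1 ends1 e f \<longleftrightarrow> dual_dotted E2 ends2 (\<phi> e) (\<phi> f))))"

definition mg_iso ::
  "'v set \<Rightarrow> 'e set \<Rightarrow> ('e \<Rightarrow> 'v set) \<Rightarrow> 'w set \<Rightarrow> 'f set \<Rightarrow> ('f \<Rightarrow> 'w set) \<Rightarrow> bool" where
  "mg_iso V1 E1 ends1 V2 E2 ends2 \<longleftrightarrow> (\<exists>\<alpha> \<beta>. bij_betw \<alpha> V1 V2 \<and> bij_betw \<beta> E1 E2 \<and>
     (\<forall>e\<in>E1. ends2 (\<beta> e) = \<alpha> ` ends1 e))"

end

theory Submission
  imports Defs
begin

lemma two_eq: "card A = 2 \<Longrightarrow> x \<in> A \<Longrightarrow> y \<in> A \<Longrightarrow> x \<noteq> y \<Longrightarrow> A = {x,y}"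
  by (auto simp: card_2_iff)

lemma cycle2_iff:
  assumes mg: "multigraph V E ends" and "e\<in>E" "f\<in>E" "e\<noteq>f"
  shows "mg_cycle E ends {e,f} \<longleftrightarrow> ends e = ends f"
proof
  assume c: "mg_cycle E ends {e,f}"
  have cc: "\<forall>v\<in>ends e \<union> ends f. card {g\<in>{e,f}. v\<in>ends g} = 2"
    using c by (simp add: mg_cycle_def)
  have both: "v \<in> ends e \<and> v \<in> ends f" if v: "v \<in> ends e \<union> ends f" for v
  proof (rule ccontr)
    assume "\<not> (v \<in> ends e \<and> v \<in> ends f)"
    then obtain k where "{g\<in>{e,f}. v\<in>ends g} \<subseteq> {k}" by auto
    then have "card {g\<in>{e,f}. v\<in>ends g} \<le> card {k}" by (intro card_mono) auto
    then have "card {g\<in>{e,f}. v\<in>ends g} \<le> 1" by simp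
    with cc v show False by auto
  qed
  then show "ends e = ends f" by blast
next
  assume eq: "ends e = ends f"
  from mg \<open>e\<in>E\<close> have "card (ends e) = 2" by (simp add: multigraph_def)
  then obtain u w where uw: "ends e = {u,w}" "u\<noteq>w" by (auto simp: card_2_iff)
  have un: "\<Union>(ends ` {e,f}) = {u,w}" using eq uw by auto
  have cd: "card {g\<in>{e,f}. v\<in>ends g} = 2" if "v \<in> {u,w}" for v
  proof -
    have "{g\<in>{e,f}. v\<in>ends g} = {e,f}" using that eq uw by auto
    then show ?thesis using \<open>e\<noteq>f\<close> by simp
  qed
  have conn: "(x,y) \<in> (mg_adj {e,f} ends)\<^sup>*" if "x \<in> {u,w}" "y\<in>{u,w}" for x y
  proof (cases "x = y")
    case True then show ?thesis by simp
  next
    case False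
    then have "ends e = {x,y}" using that uw by auto
    then have "(x,y) \<in> mg_adj {e,f} ends" by (auto simp: mg_adj_def)
    then show ?thesis by simp
  qed
  show "mg_cycle E ends {e,f}"
    unfolding mg_cycle_def mg_connected_def un
    using \<open>e\<in>E\<close> \<open>f\<in>E\<close> cd conn by auto
qed


lemma card2_other: "card A = 2 \<Longrightarrow> q \<in> A \<Longrightarrow> \<exists>p. A = {q,p} \<and> p \<noteq> q"
  by (auto simp: card_2_iff)

definition star :: "'e set \<Rightarrow> ('e \<Rightarrow> 'v set) \<Rightarrow> 'v \<Rightarrow> 'e set" where
  "star E ends v = {e\<in>E. v \<in> ends e}"

definition tri :: "('e \<Rightarrow> 'v set) \<Rightarrow> 'e \<Rightarrow> 'e \<Rightarrow> 'e \<Rightarrow> bool" where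
  "tri ends a b c \<longleftrightarrow> a\<noteq>b \<and> a\<noteq>c \<and> b\<noteq>c \<and> ends a \<inter> ends b \<noteq> {} \<and>
     ends a \<inter> ends c \<noteq> {} \<and> ends b \<inter> ends c \<noteq> {} \<and> ends a \<inter> ends b \<inter> ends c = {}"

lemma tri_shape:
  assumes "card (ends a) = 2" "card (ends b) = 2" "card (ends c) = 2" "tri ends a b c"
  obtains p q r where "p\<noteq>q" "q\<noteq>r" "r\<noteq>p" "ends a = {p,q}" "ends b = {q,r}" "ends c = {r,p}"
proof -
  from assms(4) obtain q where q: "q \<in> ends a" "q \<in> ends b" by (auto simp: tri_def)
  from card2_other[OF assms(1) q(1)] obtain p where p: "ends a = {q,p}" "p\<noteq>q" by blast
  from card2_other[OF assms(2) q(2)] obtain r where r: "ends b = {q,r}" "r\<noteq>q" by blast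
  have qc: "q \<notin> ends c" using assms(4) q by (auto simp: tri_def)
  have pc: "p \<in> ends c" using assms(4) p qc by (auto simp: tri_def)
  have rc: "r \<in> ends c" using assms(4) r qc by (auto simp: tri_def)
  have pr: "p \<noteq> r" using assms(4) p r pc by (auto simp: tri_def)
  have c: "ends c = {r,p}" using two_eq[OF assms(3) rc pc] pr by auto
  have a: "ends a = {p,q}" using p by auto
  show thesis by (rule that[of p q r]) (use p r pr a c in simp_all)
qed

lemma tri_cycle:
  assumes mg: "multigraph V E ends" and abc: "a\<in>E" "b\<in>E" "c\<in>E" and t: "tri ends a b c"
  shows "mg_cycle E ends {a,b,c}"
proof -
  have cards: "card (ends a) = 2" "card (ends b) = 2" "card (ends c) = 2"
    using mg abc by (auto simp: multigraph_def)
  obtain p q r where s: "p\<noteq>q" "q\<noteq>r" "r\<noteq>p" "ends a = {p,q}" "ends b = {q,r}" "ends c = {r,p}"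
    by (rule tri_shape[OF cards t])
  have d: "a\<noteq>b" "a\<noteq>c" "b\<noteq>c" using t by (auto simp: tri_def)
  have un: "\<Union>(ends ` {a,b,c}) = {p,q,r}" using s by auto
  have cd: "card {g\<in>{a,b,c}. v\<in>ends g} = 2" if vin: "v \<in> {p,q,r}" for v
  proof -
    consider "v = p" | "v = q" | "v = r" using vin by auto
    then show ?thesis
    proof cases
      case 1
      then have "{g\<in>{a,b,c}. v\<in>ends g} = {a,c}" using s d by auto
      then show ?thesis using d by simp
    next
      case 2
      then have "{g\<in>{a,b,c}. v\<in>ends g} = {a,b}" using s d by auto
      then show ?thesis using d by simp
    next
      case 3
      then have "{g\<in>{a,b,c}. v\<in>ends g} = {b,c}" using s d by auto
      then show ?thesis using d by simp
    qed
  qed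
  have conn: "(x,y) \<in> (mg_adj {a,b,c} ends)\<^sup>*" if "x \<in> {p,q,r}" "y\<in>{p,q,r}" for x y
  proof (cases "x = y")
    case True then show ?thesis by simp
  next
    case False
    then have "{x,y} = {p,q} \<or> {x,y} = {q,r} \<or> {x,y} = {r,p}"
      using that by (elim insertE; simp add: insert_commute)
    then have "\<exists>g\<in>{a,b,c}. ends g = {x,y}" using s by auto
    then have "(x,y) \<in> mg_adj {a,b,c} ends" by (auto simp: mg_adj_def)
    then show ?thesis by simp
  qed
  show ?thesis
    unfolding mg_cycle_def mg_connected_def un
    using abc cd conn by auto
qed

lemma uni_two: "unicyclic E ends \<Longrightarrow> mg_cycle E ends C1 \<Longrightarrow> mg_cycle E ends C2 \<Longrightarrow> C1 = C2"
  unfolding unicyclic_def by blast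

lemma no3par:
  assumes "multigraph V E ends" "unicyclic E ends" "a\<in>E" "b\<in>E" "c\<in>E" "a\<noteq>b" "a\<noteq>c" "b\<noteq>c"
    "ends a = ends b" "ends a = ends c"
  shows False
proof -
  have "mg_cycle E ends {a,b}" "mg_cycle E ends {a,c}"
    using cycle2_iff[OF assms(1)] assms by auto
  then have "{a,b} = {a,c}" using uni_two assms(2) by blast
  then show False using assms by (auto simp: doubleton_eq_iff)
qed

lemma tri_no_adj3:
  assumes mg: "multigraph V E ends" and u: "unicyclic E ends" and abc: "a\<in>E" "b\<in>E" "c\<in>E"
    and t: "tri ends a b c" and h: "h\<in>E" "h \<notin> {a,b,c}"
    and ha: "ends h \<inter> ends a \<noteq> {}" and hb: "ends h \<inter> ends b \<noteq> {}" and hc: "ends h \<inter> ends c \<noteq> {}"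
  shows False
proof -
  have cards: "card (ends a) = 2" "card (ends b) = 2" "card (ends c) = 2" "card (ends h) = 2"
    using mg abc h by (auto simp: multigraph_def)
  obtain p q r where s: "p\<noteq>q" "q\<noteq>r" "r\<noteq>p" "ends a = {p,q}" "ends b = {q,r}" "ends c = {r,p}"
    by (rule tri_shape[OF cards(1-3) t])
  have hb': "ends h \<inter> {q,r} \<noteq> {}" using hb s(5) by simp
  have hc': "ends h \<inter> {r,p} \<noteq> {}" using hc s(6) by simp
  have ha': "ends h \<inter> {p,q} \<noteq> {}" using ha s(4) by simp
  have "\<exists>u v. u \<noteq> v \<and> u \<in> ends h \<and> v \<in> ends h \<and> u\<in>{p,q,r} \<and> v \<in>{p,q,r}"
  proof -
    obtain u0 where u0: "u0 \<in> ends h" "u0 = q \<or> u0 = r" using hb' by blast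
    show ?thesis
    proof (cases "u0 = q")
      case True
      obtain v where "v \<in> ends h" "v = r \<or> v = p" using hc' by blast
      then show ?thesis using True u0(1) s(1,2) by blast
    next
      case False
      then have ur: "u0 = r" using u0 by blast
      obtain v where "v \<in> ends h" "v = p \<or> v = q" using ha' by blast
      then show ?thesis using ur u0(1) s(2,3) by blast
    qed
  qed
  then obtain u v where uv: "u \<noteq> v" "u \<in> ends h" "v \<in> ends h" "u\<in>{p,q,r}" "v \<in>{p,q,r}" by blast
  have hu: "ends h = {u,v}" using two_eq[OF cards(4) uv(2,3,1)] .
  have "{u,v} = {p,q} \<or> {u,v} = {q,r} \<or> {u,v} = {r,p}"
    using uv(1,4,5) by (elim insertE; simp add: insert_commute)
  then have "ends h = ends a \<or> ends h = ends b \<or> ends h = ends c"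
    using hu s by simp
  then obtain k where k: "k \<in> {a,b,c}" "ends h = ends k" by blast
  have "mg_cycle E ends {k,h}" using cycle2_iff[OF mg] k h abc by auto
  moreover have "mg_cycle E ends {a,b,c}" using tri_cycle[OF mg abc t] .
  ultimately have eq: "{k,h} = {a,b,c}" by (rule uni_two[OF u])
  have "h \<in> {k,h}" by simp
  then have "h \<in> {a,b,c}" by (simp only: eq)
  then show False using h(2) by simp
qed

lemma wit: "x \<in> ends h \<Longrightarrow> x \<in> ends k2 \<Longrightarrow> k2 \<in> K \<Longrightarrow> k2 \<noteq> k \<Longrightarrow>
   \<exists>k2\<in>K. k2 \<noteq> k \<and> ends h \<inter> ends k2 \<noteq> {}"
  by blast

lemma tri_adj_other:
  assumes cards: "card (ends a) = 2" "card (ends b) = 2" "card (ends c) = 2"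
    and t: "tri ends a b c" and k: "k \<in> {a,b,c}" and hk: "ends h \<inter> ends k \<noteq> {}"
  shows "\<exists>k2\<in>{a,b,c}. k2 \<noteq> k \<and> ends h \<inter> ends k2 \<noteq> {}"
proof -
  obtain p q r where s: "p\<noteq>q" "q\<noteq>r" "r\<noteq>p" "ends a = {p,q}" "ends b = {q,r}" "ends c = {r,p}"
    by (rule tri_shape[OF cards t])
  have d: "a\<noteq>b" "a\<noteq>c" "b\<noteq>c" using t by (auto simp: tri_def)
  have pa: "p \<in> ends a" "p \<in> ends c" "q \<in> ends a" "q \<in> ends b" "r \<in> ends b" "r \<in> ends c"
    using s by auto
  have I: "a \<in> {a,b,c}" "b \<in> {a,b,c}" "c \<in> {a,b,c}" by simp_all
  from k consider "k = a" | "k = b" | "k = c" by blast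
  then show ?thesis
  proof cases
    case 1
    then have "ends h \<inter> {p,q} \<noteq> {}" using hk s(4) by simp
    then have "p \<in> ends h \<or> q \<in> ends h" by blast
    then show ?thesis
    proof
      assume "p \<in> ends h"
      then have "c \<noteq> k \<and> ends h \<inter> ends c \<noteq> {}" using pa(2) 1 d by blast
      then show ?thesis by blast
    next
      assume "q \<in> ends h"
      then have "b \<noteq> k \<and> ends h \<inter> ends b \<noteq> {}" using pa(4) 1 d by blast
      then show ?thesis by blast
    qed
  next
    case 2
    then have "ends h \<inter> {q,r} \<noteq> {}" using hk s(5) by simp
    then have "q \<in> ends h \<or> r \<in> ends h" by blast
    then show ?thesis
    proof
      assume "q \<in> ends h"
      then have "a \<noteq> k \<and> ends h \<inter> ends a \<noteq> {}" using pa(3) 2 d by blast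
      then show ?thesis by blast
    next
      assume "r \<in> ends h"
      then have "c \<noteq> k \<and> ends h \<inter> ends c \<noteq> {}" using pa(6) 2 d by blast
      then show ?thesis by blast
    qed
  next
    case 3
    then have "ends h \<inter> {r,p} \<noteq> {}" using hk s(6) by simp
    then have "r \<in> ends h \<or> p \<in> ends h" by blast
    then show ?thesis
    proof
      assume "r \<in> ends h"
      then have "b \<noteq> k \<and> ends h \<inter> ends b \<noteq> {}" using pa(5) 3 d by blast
      then show ?thesis by blast
    next
      assume "p \<in> ends h"
      then have "a \<noteq> k \<and> ends h \<inter> ends a \<noteq> {}" using pa(1) 3 d by blast
      then show ?thesis by blast
    qed
  qed
qed

lemma closed_reach:
  assumes conn: "mg_connected V E ends" and u0: "u0 \<in> V" "u0 \<in> K"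
    and cl: "\<And>e. e\<in>E \<Longrightarrow> ends e \<inter> K \<noteq> {} \<Longrightarrow> ends e \<subseteq> K"
  shows "V \<subseteq> K"
proof
  fix v assume v: "v \<in> V"
  have "(u0, v) \<in> (mg_adj E ends)\<^sup>*" using conn u0 v by (auto simp: mg_connected_def)
  then show "v \<in> K"
  proof (induction rule: rtrancl_induct)
    case base then show ?case using u0 by simp
  next
    case (step y z)
    then obtain e where e: "e\<in>E" "ends e = {y,z}" by (auto simp: mg_adj_def)
    have "ends e \<inter> K \<noteq> {}" using e(2) step.IH by blast
    then have "ends e \<subseteq> K" by (rule cl[OF e(1)])
    then show ?case using e(2) by blast
  qed
qed

lemma cycle_private:
  assumes c: "mg_cycle E ends C" and k: "k \<in> C" "u \<in> ends k" and pr: "\<And>g. g\<in>C \<Longrightarrow> u \<in> ends g \<Longrightarrow> g = k"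
  shows False
proof -
  have "u \<in> \<Union>(ends ` C)" using k by auto
  then have "card {g\<in>C. u\<in>ends g} = 2" using c unfolding mg_cycle_def by blast
  moreover have "{g\<in>C. u\<in>ends g} = {k}" using pr k by blast
  ultimately show False by simp
qed

lemma star_nonempty:
  assumes conn: "mg_connected V E ends" and v: "v \<in> V" and c: "2 \<le> card V"
  shows "star E ends v \<noteq> {}"
proof -
  have "\<exists>u\<in>V. u \<noteq> v"
  proof (rule ccontr)
    assume "\<not> ?thesis" then have "V \<subseteq> {v}" by auto
    then have "card V \<le> card {v}" by (intro card_mono) auto
    then have "card V \<le> 1" by simp
    with c show False by simp
  qed
  then obtain u where u: "u\<in>V" "u\<noteq>v" by blast
  have "(v,u) \<in> (mg_adj E ends)\<^sup>*" using conn u v by (auto simp: mg_connected_def)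
  then obtain z where "(v,z) \<in> mg_adj E ends" using u(2) by (metis converse_rtranclE)
  then obtain e where "e\<in>E" "ends e = {v,z}" by (auto simp: mg_adj_def)
  then show ?thesis by (auto simp: star_def)
qed

lemma star_inj:
  assumes mg: "multigraph V E ends" and conn: "mg_connected V E ends" and c: "3 \<le> card V"
    and v: "v\<in>V" "v'\<in>V" "v\<noteq>v'" and eq: "star E ends v = star E ends v'"
  shows False
proof -
  have "V \<subseteq> {v,v'}"
  proof (rule closed_reach[OF conn v(1)])
    show "v \<in> {v,v'}" by simp
  next
    fix e assume e: "e\<in>E" "ends e \<inter> {v,v'} \<noteq> {}"
    then have "v \<in> ends e \<or> v' \<in> ends e" by blast
    then have "e \<in> star E ends v \<or> e \<in> star E ends v'" using e(1) by (auto simp: star_def)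
    then have "e \<in> star E ends v" using eq by simp
    moreover have "e \<in> star E ends v'" using calculation eq by simp
    ultimately have "v \<in> ends e" "v' \<in> ends e" by (auto simp: star_def)
    moreover have "card (ends e) = 2" using mg e by (auto simp: multigraph_def)
    ultimately have "ends e = {v,v'}" using two_eq[of "ends e" v v'] v(3) by blast
    then show "ends e \<subseteq> {v,v'}" by simp
  qed
  then have "card V \<le> card {v,v'}" by (intro card_mono) auto
  then have "card V \<le> 2" using v(3) by simp
  with c show False by simp
qed



definition good :: "'e set \<Rightarrow> ('e \<Rightarrow> 'v set) \<Rightarrow> ('f \<Rightarrow> 'w set) \<Rightarrow> ('e \<Rightarrow> 'f) \<Rightarrow> bool" where
  "good E1 ends1 ends2 \<phi> \<longleftrightarrow> (\<forall>e\<in>E1. \<forall>f\<in>E1. \<forall>g\<in>E1. e\<noteq>f \<longrightarrow> e\<noteq>g \<longrightarrow> f\<noteq>g \<longrightarrow>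
     ends1 e \<inter> ends1 f \<noteq> {} \<longrightarrow> ends1 e \<inter> ends1 g \<noteq> {} \<longrightarrow> ends1 f \<inter> ends1 g \<noteq> {} \<longrightarrow>
     ((ends1 e \<inter> ends1 f \<inter> ends1 g \<noteq> {}) = (ends2 (\<phi> e) \<inter> ends2 (\<phi> f) \<inter> ends2 (\<phi> g) \<noteq> {})))"

lemma L3:
  assumes "card (ends e) = 2" "card (ends f) = 2" "card (ends g) = 2"
    and w: "w \<in> ends e" "w \<in> ends f" "w \<in> ends g"
    and efh: "ends e \<inter> ends f \<inter> ends h \<noteq> {}" and egh: "ends e \<inter> ends g \<inter> ends h \<noteq> {}"
    and np: "\<not> (ends e = ends f \<and> ends e = ends g)"
  shows "w \<in> ends h"
proof (rule ccontr)
  assume wh: "w \<notin> ends h"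
  obtain p where p: "p \<in> ends e" "p \<in> ends f" "p \<in> ends h" using efh by blast
  have pw: "p \<noteq> w" using p(3) wh by blast
  have e: "ends e = {w,p}" using two_eq[OF assms(1) w(1) p(1) pw[symmetric]] .
  have f: "ends f = {w,p}" using two_eq[OF assms(2) w(2) p(2) pw[symmetric]] .
  obtain q where q: "q \<in> ends e" "q \<in> ends g" "q \<in> ends h" using egh by blast
  have qw: "q \<noteq> w" using q(3) wh by blast
  have "q = p" using q(1) qw e by blast
  then have g: "ends g = {w,p}" using two_eq[OF assms(3) w(3) q(2)] qw by blast
  have "ends e = ends f \<and> ends e = ends g" using e f g by simp
  with np show False by blast
qed

locale iso2 =
  fixes V1 :: "'v set" and E1 :: "'e set" and ends1 :: "'e \<Rightarrow> 'v set"
    and V2 :: "'w set" and E2 :: "'f set" and ends2 :: "'f \<Rightarrow> 'w set"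
    and \<phi> :: "'e \<Rightarrow> 'f"
  assumes mg1: "multigraph V1 E1 ends1" and mg2: "multigraph V2 E2 ends2"
    and bij: "bij_betw \<phi> E1 E2"
    and adj: "\<And>e f. e\<in>E1 \<Longrightarrow> f\<in>E1 \<Longrightarrow> (ends1 e \<inter> ends1 f \<noteq> {}) = (ends2 (\<phi> e) \<inter> ends2 (\<phi> f) \<noteq> {})"
    and par: "\<And>e f. e\<in>E1 \<Longrightarrow> f\<in>E1 \<Longrightarrow> (ends1 e = ends1 f) = (ends2 (\<phi> e) = ends2 (\<phi> f))"
begin

definition psi where "psi = inv_into E1 \<phi>"

lemma phi_in: "e\<in>E1 \<Longrightarrow> \<phi> e \<in> E2" by (rule bij_betw_apply[OF bij])
lemma psi_bij: "bij_betw psi E2 E1" unfolding psi_def by (rule bij_betw_inv_into[OF bij])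
lemma psi_in: "e\<in>E2 \<Longrightarrow> psi e \<in> E1" by (rule bij_betw_apply[OF psi_bij])
lemma phi_psi: "e\<in>E2 \<Longrightarrow> \<phi> (psi e) = e" unfolding psi_def by (rule bij_betw_inv_into_right[OF bij])
lemma psi_phi: "e\<in>E1 \<Longrightarrow> psi (\<phi> e) = e" unfolding psi_def by (rule bij_betw_inv_into_left[OF bij])
lemma phi_eq: "e\<in>E1 \<Longrightarrow> f\<in>E1 \<Longrightarrow> (\<phi> e = \<phi> f) = (e = f)"
  by (rule inj_on_eq_iff[OF bij_betw_imp_inj_on[OF bij]])
lemma c1: "e\<in>E1 \<Longrightarrow> card (ends1 e) = 2" using mg1 by (simp add: multigraph_def)
lemma c2: "e\<in>E2 \<Longrightarrow> card (ends2 e) = 2" using mg2 by (simp add: multigraph_def)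
lemma sub1: "e\<in>E1 \<Longrightarrow> ends1 e \<subseteq> V1" using mg1 by (simp add: multigraph_def)
lemma sub2: "e\<in>E2 \<Longrightarrow> ends2 e \<subseteq> V2" using mg2 by (simp add: multigraph_def)

lemma sym: "iso2 V2 E2 ends2 V1 E1 ends1 psi"
proof
  show "multigraph V2 E2 ends2" by (rule mg2)
  show "multigraph V1 E1 ends1" by (rule mg1)
  show "bij_betw psi E2 E1" by (rule psi_bij)
  fix e f assume ef: "e\<in>E2" "f\<in>E2"
  show "(ends2 e \<inter> ends2 f \<noteq> {}) = (ends1 (psi e) \<inter> ends1 (psi f) \<noteq> {})"
    using adj[OF psi_in[OF ef(1)] psi_in[OF ef(2)]] phi_psi[OF ef(1)] phi_psi[OF ef(2)] by simp
  show "(ends2 e = ends2 f) = (ends1 (psi e) = ends1 (psi f))"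
    using par[OF psi_in[OF ef(1)] psi_in[OF ef(2)]] phi_psi[OF ef(1)] phi_psi[OF ef(2)] by simp
qed

lemma goodD:
  assumes "good E1 ends1 ends2 \<phi>" "e\<in>E1" "f\<in>E1" "g\<in>E1" "e\<noteq>f" "e\<noteq>g" "f\<noteq>g"
    "ends1 e \<inter> ends1 f \<noteq> {}" "ends1 e \<inter> ends1 g \<noteq> {}" "ends1 f \<inter> ends1 g \<noteq> {}"
  shows "(ends1 e \<inter> ends1 f \<inter> ends1 g \<noteq> {}) = (ends2 (\<phi> e) \<inter> ends2 (\<phi> f) \<inter> ends2 (\<phi> g) \<noteq> {})"
  using assms(1)[unfolded good_def, rule_format, OF assms(2-10)] .

end



definition nopar3 :: "'e set \<Rightarrow> ('e \<Rightarrow> 'v set) \<Rightarrow> bool" where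
  "nopar3 E ends \<longleftrightarrow> (\<forall>a\<in>E. \<forall>b\<in>E. \<forall>c\<in>E. a\<noteq>b \<longrightarrow> a\<noteq>c \<longrightarrow> b\<noteq>c \<longrightarrow>
     ends a = ends b \<longrightarrow> ends a \<noteq> ends c)"


context iso2
begin

lemma adjI: "e\<in>E1 \<Longrightarrow> f\<in>E1 \<Longrightarrow> x \<in> ends1 e \<Longrightarrow> x \<in> ends1 f \<Longrightarrow> ends2 (\<phi> e) \<inter> ends2 (\<phi> f) \<noteq> {}"
  using adj[of e f] by blast

lemma adjI': "e\<in>E1 \<Longrightarrow> f\<in>E1 \<Longrightarrow> x \<in> ends2 (\<phi> e) \<Longrightarrow> x \<in> ends2 (\<phi> f) \<Longrightarrow> ends1 e \<inter> ends1 f \<noteq> {}"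
  using adj[of e f] by blast

lemma star3:
  assumes good: "good E1 ends1 ends2 \<phi>"
    and np1: "nopar3 E1 ends1"
    and np2: "nopar3 E2 ends2"
    and efg: "e \<in> star E1 ends1 v" "f \<in> star E1 ends1 v" "g \<in> star E1 ends1 v"
    and d: "e\<noteq>f" "e\<noteq>g" "f\<noteq>g"
  shows "\<exists>w\<in>V2. \<phi> ` star E1 ends1 v = star E2 ends2 w"
proof -
  have E: "e\<in>E1" "f\<in>E1" "g\<in>E1" and vs: "v \<in> ends1 e" "v \<in> ends1 f" "v \<in> ends1 g"
    using efg by (auto simp: star_def)
  have d2: "\<phi> e \<noteq> \<phi> f" "\<phi> e \<noteq> \<phi> g" "\<phi> f \<noteq> \<phi> g" using d phi_eq E by auto
  have a1: "ends1 e \<inter> ends1 f \<noteq> {}" "ends1 e \<inter> ends1 g \<noteq> {}" "ends1 f \<inter> ends1 g \<noteq> {}"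
    using vs by blast+
  have "ends1 e \<inter> ends1 f \<inter> ends1 g \<noteq> {}" using vs by blast
  then have "ends2 (\<phi> e) \<inter> ends2 (\<phi> f) \<inter> ends2 (\<phi> g) \<noteq> {}"
    using goodD[OF good E d a1] by blast
  then obtain w where w: "w \<in> ends2 (\<phi> e)" "w \<in> ends2 (\<phi> f)" "w \<in> ends2 (\<phi> g)" by blast
  have wV: "w \<in> V2" using w(1) sub2[OF phi_in[OF E(1)]] by blast
  have np2': "\<not> (ends2 (\<phi> e) = ends2 (\<phi> f) \<and> ends2 (\<phi> e) = ends2 (\<phi> g))"
    using np2[unfolded nopar3_def, rule_format, OF phi_in[OF E(1)] phi_in[OF E(2)] phi_in[OF E(3)] d2] by blast
  have np1': "\<not> (ends1 e = ends1 f \<and> ends1 e = ends1 g)"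
    using np1[unfolded nopar3_def, rule_format, OF E d] by blast
  have "\<phi> ` star E1 ends1 v = star E2 ends2 w"
  proof
    show "\<phi> ` star E1 ends1 v \<subseteq> star E2 ends2 w"
    proof
      fix h' assume "h' \<in> \<phi> ` star E1 ends1 v"
      then obtain h where h: "h \<in> star E1 ends1 v" "h' = \<phi> h" by blast
      have hE: "h \<in> E1" and hv: "v \<in> ends1 h" using h(1) by (auto simp: star_def)
      have "w \<in> ends2 (\<phi> h)"
      proof (cases "h \<in> {e,f,g}")
        case True then show ?thesis using w by blast
      next
        case False
        then have hd: "e \<noteq> h" "f \<noteq> h" "g \<noteq> h" by auto
        have c1': "ends2 (\<phi> e) \<inter> ends2 (\<phi> f) \<inter> ends2 (\<phi> h) \<noteq> {}"
        proof -
          have "ends1 e \<inter> ends1 f \<inter> ends1 h \<noteq> {}" using vs hv by blast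
          moreover have "ends1 e \<inter> ends1 h \<noteq> {}" "ends1 f \<inter> ends1 h \<noteq> {}" using vs hv by blast+
          ultimately show ?thesis using goodD[OF good E(1,2) hE d(1) hd(1,2) a1(1)] by blast
        qed
        have c2': "ends2 (\<phi> e) \<inter> ends2 (\<phi> g) \<inter> ends2 (\<phi> h) \<noteq> {}"
        proof -
          have "ends1 e \<inter> ends1 g \<inter> ends1 h \<noteq> {}" using vs hv by blast
          moreover have "ends1 e \<inter> ends1 h \<noteq> {}" "ends1 g \<inter> ends1 h \<noteq> {}" using vs hv by blast+
          ultimately show ?thesis using goodD[OF good E(1,3) hE d(2) hd(1,3) a1(2)] by blast
        qed
        show ?thesis
          by (rule L3[where ends=ends2 and e="\<phi> e" and f="\<phi> f" and g="\<phi> g" and h="\<phi> h", OF c2[OF phi_in[OF E(1)]] c2[OF phi_in[OF E(2)]] c2[OF phi_in[OF E(3)]] w c1' c2' np2'])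
      qed
      then show "h' \<in> star E2 ends2 w" using h(2) phi_in[OF hE] by (simp add: star_def)
    qed
  next
    show "star E2 ends2 w \<subseteq> \<phi> ` star E1 ends1 v"
    proof
      fix h' assume "h' \<in> star E2 ends2 w"
      then have h'E: "h' \<in> E2" and wh: "w \<in> ends2 h'" by (auto simp: star_def)
      define h where "h = psi h'"
      have hE: "h \<in> E1" unfolding h_def by (rule psi_in[OF h'E])
      have hh: "\<phi> h = h'" unfolding h_def by (rule phi_psi[OF h'E])
      have "v \<in> ends1 h"
      proof (cases "h \<in> {e,f,g}")
        case True then show ?thesis using vs by blast
      next
        case False
        then have hd: "e \<noteq> h" "f \<noteq> h" "g \<noteq> h" by auto
        have ah: "ends1 e \<inter> ends1 h \<noteq> {}" "ends1 f \<inter> ends1 h \<noteq> {}" "ends1 g \<inter> ends1 h \<noteq> {}"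
          using adjI'[OF E(1) hE w(1)] adjI'[OF E(2) hE w(2)] adjI'[OF E(3) hE w(3)] wh hh by auto
        have "ends2 (\<phi> e) \<inter> ends2 (\<phi> f) \<inter> ends2 (\<phi> h) \<noteq> {}" using w wh hh by blast
        then have c1': "ends1 e \<inter> ends1 f \<inter> ends1 h \<noteq> {}"
          using goodD[OF good E(1,2) hE d(1) hd(1,2) a1(1) ah(1,2)] by blast
        have "ends2 (\<phi> e) \<inter> ends2 (\<phi> g) \<inter> ends2 (\<phi> h) \<noteq> {}" using w wh hh by blast
        then have c2': "ends1 e \<inter> ends1 g \<inter> ends1 h \<noteq> {}"
          using goodD[OF good E(1,3) hE d(2) hd(1,3) a1(2) ah(1,3)] by blast
        show ?thesis
          by (rule L3[where ends=ends1 and e=e and f=f and g=g and h=h, OF c1[OF E(1)] c1[OF E(2)] c1[OF E(3)] vs c1' c2' np1'])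
      qed
      then have "h \<in> star E1 ends1 v" using hE by (simp add: star_def)
      then show "h' \<in> \<phi> ` star E1 ends1 v" using hh by blast
    qed
  qed
  then show ?thesis using wV by blast
qed


lemma core:
  assumes good: "good E1 ends1 ends2 \<phi>" and eE: "e\<in>E1" and ee: "ends1 e = {v,u}"
    and exy: "ends2 (\<phi> e) = {x,y}" and xy: "x\<noteq>y"
    and gh: "g0\<in>E1" "h0\<in>E1" "g0\<noteq>e" "h0\<noteq>e" "v\<notin>ends1 g0" "v \<notin> ends1 h0"
    and xg: "x \<in> ends2 (\<phi> g0)" and yh: "y \<in> ends2 (\<phi> h0)"
    and yg: "y \<notin> ends2 (\<phi> g0)" and xh: "x \<notin> ends2 (\<phi> h0)"
  shows False
proof -
  have "ends1 g0 \<inter> ends1 e \<noteq> {}" using adjI'[OF gh(1) eE xg] exy by simp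
  then have ug: "u \<in> ends1 g0" using ee gh(5) by auto
  have "ends1 h0 \<inter> ends1 e \<noteq> {}" using adjI'[OF gh(2) eE yh] exy by simp
  then have uh: "u \<in> ends1 h0" using ee gh(6) by auto
  have gh0: "g0 \<noteq> h0" using yh yg by blast
  have ue: "u \<in> ends1 e" using ee by simp
  have a1: "ends1 e \<inter> ends1 g0 \<noteq> {}" "ends1 e \<inter> ends1 h0 \<noteq> {}" "ends1 g0 \<inter> ends1 h0 \<noteq> {}"
    using ue ug uh by blast+
  have "ends1 e \<inter> ends1 g0 \<inter> ends1 h0 \<noteq> {}" using ue ug uh by blast
  then have "ends2 (\<phi> e) \<inter> ends2 (\<phi> g0) \<inter> ends2 (\<phi> h0) \<noteq> {}"
    using goodD[OF good eE gh(1,2) gh(3)[symmetric] gh(4)[symmetric] gh0 a1] by blast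
  then obtain z where z: "z \<in> {x,y}" "z \<in> ends2 (\<phi> g0)" "z \<in> ends2 (\<phi> h0)" using exy by blast
  show False using z xh yg by blast
qed

lemma star1:
  assumes good: "good E1 ends1 ends2 \<phi>" and S: "star E1 ends1 v = {e}"
  shows "\<exists>w\<in>V2. \<phi> ` star E1 ends1 v = star E2 ends2 w"
proof -
  have "e \<in> star E1 ends1 v" using S by simp
  then have eE: "e \<in> E1" and ve: "v \<in> ends1 e" by (auto simp: star_def)
  obtain u where ee: "ends1 e = {v,u}" "u \<noteq> v" using card2_other[OF c1[OF eE] ve] by blast
  obtain x y where exy: "ends2 (\<phi> e) = {x,y}" "x\<noteq>y" using c2[OF phi_in[OF eE]] by (auto simp: card_2_iff)
  have peE: "\<phi> e \<in> E2" by (rule phi_in[OF eE])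
  have "star E2 ends2 x = {\<phi> e} \<or> star E2 ends2 y = {\<phi> e}"
  proof (rule ccontr)
    assume nn: "\<not> ?thesis"
    have "\<phi> e \<in> star E2 ends2 x" "\<phi> e \<in> star E2 ends2 y" using peE exy by (auto simp: star_def)
    then have "\<exists>g\<in>star E2 ends2 x. g \<noteq> \<phi> e" "\<exists>g\<in>star E2 ends2 y. g \<noteq> \<phi> e" using nn by blast+
    then obtain g h where g: "g\<in>E2" "x \<in> ends2 g" "g \<noteq> \<phi> e" and h: "h\<in>E2" "y \<in> ends2 h" "h \<noteq> \<phi> e"
      by (auto simp: star_def)
    define g0 where "g0 = psi g"
    define h0 where "h0 = psi h"
    have g0: "g0 \<in> E1" "\<phi> g0 = g" unfolding g0_def by (rule psi_in[OF g(1)], rule phi_psi[OF g(1)])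
    have h0: "h0 \<in> E1" "\<phi> h0 = h" unfolding h0_def by (rule psi_in[OF h(1)], rule phi_psi[OF h(1)])
    have g0e: "g0 \<noteq> e" using g0(2) g(3) by blast
    have h0e: "h0 \<noteq> e" using h0(2) h(3) by blast
    have vg: "v \<notin> ends1 g0"
    proof
      assume "v \<in> ends1 g0" then have "g0 \<in> star E1 ends1 v" using g0(1) by (simp add: star_def)
      then show False using S g0e by simp
    qed
    have vh: "v \<notin> ends1 h0"
    proof
      assume "v \<in> ends1 h0" then have "h0 \<in> star E1 ends1 v" using h0(1) by (simp add: star_def)
      then show False using S h0e by simp
    qed
    have yg: "y \<notin> ends2 g"
    proof
      assume "y \<in> ends2 g"
      then have "ends2 g = {x,y}" using two_eq[OF c2[OF g(1)] g(2)] exy(2) by blast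
      then have "ends2 (\<phi> g0) = ends2 (\<phi> e)" using g0(2) exy(1) by simp
      then have "ends1 g0 = ends1 e" using par[OF g0(1) eE] by simp
      then show False using vg ve by simp
    qed
    have xh: "x \<notin> ends2 h"
    proof
      assume "x \<in> ends2 h"
      then have "ends2 h = {x,y}" using two_eq[OF c2[OF h(1)] _ h(2)] exy(2) by blast
      then have "ends2 (\<phi> h0) = ends2 (\<phi> e)" using h0(2) exy(1) by simp
      then have "ends1 h0 = ends1 e" using par[OF h0(1) eE] by simp
      then show False using vh ve by simp
    qed
    show False
      by (rule core[OF good eE ee(1) exy g0(1) h0(1) g0e h0e vg vh])
         (use g0(2) h0(2) g(2) h(2) yg xh in simp_all)
  qed
  then obtain w where w: "w \<in> {x,y}" "star E2 ends2 w = {\<phi> e}" by blast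
  have "w \<in> V2" using w(1) exy(1) sub2[OF peE] by blast
  moreover have "\<phi> ` star E1 ends1 v = star E2 ends2 w" using S w(2) by simp
  ultimately show ?thesis by blast
qed

lemma star2:
  assumes good: "good E1 ends1 ends2 \<phi>"
    and np2: "nopar3 E2 ends2"
    and S: "star E1 ends1 v = {e,f}" and ef: "e \<noteq> f"
  shows "\<exists>w\<in>V2. \<phi> ` star E1 ends1 v = star E2 ends2 w"
proof -
  have "e \<in> star E1 ends1 v" "f \<in> star E1 ends1 v" using S by simp_all
  then have eE: "e \<in> E1" and ve: "v \<in> ends1 e" and fE: "f \<in> E1" and vf: "v \<in> ends1 f"
    by (auto simp: star_def)
  have peE: "\<phi> e \<in> E2" by (rule phi_in[OF eE])
  have pfE: "\<phi> f \<in> E2" by (rule phi_in[OF fE])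
  have pef: "\<phi> e \<noteq> \<phi> f" using phi_eq[OF eE fE] ef by simp
  have img: "\<phi> ` star E1 ends1 v = {\<phi> e, \<phi> f}" using S by simp
  have notS: "v \<notin> ends1 k" if "k \<in> E1" "k \<noteq> e" "k \<noteq> f" for k
  proof
    assume "v \<in> ends1 k" then have "k \<in> star E1 ends1 v" using that(1) by (simp add: star_def)
    then show False using S that(2,3) by simp
  qed
  show ?thesis
  proof (cases "ends1 e = ends1 f")
    case True
    obtain u where ee: "ends1 e = {v,u}" "u \<noteq> v" using card2_other[OF c1[OF eE] ve] by blast
    obtain x y where exy: "ends2 (\<phi> e) = {x,y}" "x\<noteq>y" using c2[OF peE] by (auto simp: card_2_iff)
    have fxy: "ends2 (\<phi> f) = {x,y}" using par[OF eE fE] True exy(1) by simp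
    have "star E2 ends2 x = {\<phi> e, \<phi> f} \<or> star E2 ends2 y = {\<phi> e, \<phi> f}"
    proof (rule ccontr)
      assume nn: "\<not> ?thesis"
      have "{\<phi> e, \<phi> f} \<subseteq> star E2 ends2 x" "{\<phi> e, \<phi> f} \<subseteq> star E2 ends2 y"
        using peE pfE exy fxy by (auto simp: star_def)
      then have "\<exists>g\<in>star E2 ends2 x. g \<notin> {\<phi> e, \<phi> f}" "\<exists>g\<in>star E2 ends2 y. g \<notin> {\<phi> e, \<phi> f}"
        using nn by blast+
      then obtain g h where g: "g\<in>E2" "x \<in> ends2 g" "g \<notin> {\<phi> e, \<phi> f}"
        and h: "h\<in>E2" "y \<in> ends2 h" "h \<notin> {\<phi> e, \<phi> f}"
        by (auto simp: star_def)
      define g0 where "g0 = psi g"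
      define h0 where "h0 = psi h"
      have g0: "g0 \<in> E1" "\<phi> g0 = g" unfolding g0_def by (rule psi_in[OF g(1)], rule phi_psi[OF g(1)])
      have h0: "h0 \<in> E1" "\<phi> h0 = h" unfolding h0_def by (rule psi_in[OF h(1)], rule phi_psi[OF h(1)])
      have g0e: "g0 \<noteq> e" "g0 \<noteq> f" using g0(2) g(3) by auto
      have h0e: "h0 \<noteq> e" "h0 \<noteq> f" using h0(2) h(3) by auto
      have vg: "v \<notin> ends1 g0" by (rule notS[OF g0(1) g0e])
      have vh: "v \<notin> ends1 h0" by (rule notS[OF h0(1) h0e])
      have yg: "y \<notin> ends2 g"
      proof
        assume "y \<in> ends2 g"
        then have "ends2 g = {x,y}" using two_eq[OF c2[OF g(1)] g(2)] exy(2) by blast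
        then show False using np2[unfolded nopar3_def, rule_format, OF peE pfE g(1) pef] g(3) exy(1) fxy by auto
      qed
      have xh: "x \<notin> ends2 h"
      proof
        assume "x \<in> ends2 h"
        then have "ends2 h = {x,y}" using two_eq[OF c2[OF h(1)] _ h(2)] exy(2) by blast
        then show False using np2[unfolded nopar3_def, rule_format, OF peE pfE h(1) pef] h(3) exy(1) fxy by auto
      qed
      show False
        by (rule core[OF good eE ee(1) exy g0(1) h0(1) g0e(1) h0e(1) vg vh])
           (use g0(2) h0(2) g(2) h(2) yg xh in simp_all)
    qed
    then obtain w where w: "w \<in> {x,y}" "star E2 ends2 w = {\<phi> e, \<phi> f}" by blast
    have "w \<in> V2" using w(1) exy(1) sub2[OF peE] by blast
    then show ?thesis using img w(2) by auto
  next
    case False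
    obtain w where w: "w \<in> ends2 (\<phi> e)" "w \<in> ends2 (\<phi> f)" using adjI[OF eE fE ve vf] by blast
    have wV: "w \<in> V2" using w(1) sub2[OF peE] by blast
    have "star E2 ends2 w = {\<phi> e, \<phi> f}"
    proof
      show "{\<phi> e, \<phi> f} \<subseteq> star E2 ends2 w" using peE pfE w by (auto simp: star_def)
    next
      show "star E2 ends2 w \<subseteq> {\<phi> e, \<phi> f}"
      proof
        fix g assume gs: "g \<in> star E2 ends2 w"
        then have g: "g \<in> E2" "w \<in> ends2 g" by (auto simp: star_def)
        show "g \<in> {\<phi> e, \<phi> f}"
        proof (rule ccontr)
          assume gn: "g \<notin> {\<phi> e, \<phi> f}"
          define g0 where "g0 = psi g"
          have g0: "g0 \<in> E1" "\<phi> g0 = g" unfolding g0_def by (rule psi_in[OF g(1)], rule phi_psi[OF g(1)])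
          have g0e: "g0 \<noteq> e" "g0 \<noteq> f" using g0(2) gn by auto
          have vg: "v \<notin> ends1 g0" by (rule notS[OF g0(1) g0e])
          have a1: "ends1 e \<inter> ends1 f \<noteq> {}" using ve vf by blast
          have ag: "ends1 e \<inter> ends1 g0 \<noteq> {}" "ends1 f \<inter> ends1 g0 \<noteq> {}"
            using adjI'[OF eE g0(1) w(1)] adjI'[OF fE g0(1) w(2)] g0(2) g(2) by auto
          have "ends2 (\<phi> e) \<inter> ends2 (\<phi> f) \<inter> ends2 (\<phi> g0) \<noteq> {}" using w g(2) g0(2) by blast
          then have "ends1 e \<inter> ends1 f \<inter> ends1 g0 \<noteq> {}"
            using goodD[OF good eE fE g0(1) ef g0e(1)[symmetric] g0e(2)[symmetric] a1 ag] by blast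
          then obtain z where z: "z \<in> ends1 e" "z \<in> ends1 f" "z \<in> ends1 g0" by blast
          have zv: "z \<noteq> v" using z(3) vg by blast
          have "ends1 e = {v,z}" using two_eq[OF c1[OF eE] ve z(1) zv[symmetric]] .
          moreover have "ends1 f = {v,z}" using two_eq[OF c1[OF fE] vf z(2) zv[symmetric]] .
          ultimately show False using False by simp
        qed
      qed
    qed
    then show ?thesis using img wV by auto
  qed
qed

lemma star_image:
  assumes good: "good E1 ends1 ends2 \<phi>"
    and np1: "nopar3 E1 ends1"
    and np2: "nopar3 E2 ends2"
    and ne: "star E1 ends1 v \<noteq> {}"
  shows "\<exists>w\<in>V2. \<phi> ` star E1 ends1 v = star E2 ends2 w"
proof -
  obtain e where e: "e \<in> star E1 ends1 v" using ne by blast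
  show ?thesis
  proof (cases "star E1 ends1 v = {e}")
    case True then show ?thesis by (rule star1[OF good])
  next
    case False
    then obtain f where f: "f \<in> star E1 ends1 v" "f \<noteq> e" using e by blast
    show ?thesis
    proof (cases "star E1 ends1 v = {e,f}")
      case True then show ?thesis using star2[OF good np2 True] f(2) by blast
    next
      case False
      then obtain g where g: "g \<in> star E1 ends1 v" "g \<noteq> e" "g \<noteq> f" using e f by blast
      show ?thesis by (rule star3[OF good np1 np2 e f(1) g(1)]) (use f g in auto)
    qed
  qed
qed

end


definition is_paw :: "'v set \<Rightarrow> 'e set \<Rightarrow> ('e \<Rightarrow> 'v set) \<Rightarrow> bool" where
  "is_paw V E ends \<longleftrightarrow> (\<exists>t p q s e1 e2 e3 e4. V = {t,p,q,s} \<and> distinct [t,p,q,s] \<and>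
     E = {e1,e2,e3,e4} \<and> distinct [e1,e2,e3,e4] \<and>
     ends e1 = {t,p} \<and> ends e2 = {t,q} \<and> ends e3 = {p,q} \<and> ends e4 = {t,s})"

lemma paw_iso:
  assumes p1: "is_paw V1 E1 ends1" and p2: "is_paw V2 E2 ends2"
  shows "mg_iso V1 E1 ends1 V2 E2 ends2"
proof -
  obtain t p q s e1 e2 e3 e4 where A: "V1 = {t,p,q,s}" "distinct [t,p,q,s]"
     "E1 = {e1,e2,e3,e4}" "distinct [e1,e2,e3,e4]"
     "ends1 e1 = {t,p}" "ends1 e2 = {t,q}" "ends1 e3 = {p,q}" "ends1 e4 = {t,s}"
    using p1 unfolding is_paw_def by blast
  obtain t' p' q' s' f1 f2 f3 f4 where B: "V2 = {t',p',q',s'}" "distinct [t',p',q',s']"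
     "E2 = {f1,f2,f3,f4}" "distinct [f1,f2,f3,f4]"
     "ends2 f1 = {t',p'}" "ends2 f2 = {t',q'}" "ends2 f3 = {p',q'}" "ends2 f4 = {t',s'}"
    using p2 unfolding is_paw_def by blast
  define \<alpha> where "\<alpha> v = (if v = t then t' else if v = p then p' else if v = q then q' else s')" for v
  define \<beta> where "\<beta> e = (if e = e1 then f1 else if e = e2 then f2 else if e = e3 then f3 else f4)" for e
  have \<alpha>: "\<alpha> t = t'" "\<alpha> p = p'" "\<alpha> q = q'" "\<alpha> s = s'" using A(2) by (auto simp: \<alpha>_def)
  have \<beta>: "\<beta> e1 = f1" "\<beta> e2 = f2" "\<beta> e3 = f3" "\<beta> e4 = f4" using A(4) by (auto simp: \<beta>_def)
  have "bij_betw \<alpha> V1 V2"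
  proof (rule bij_betw_imageI)
    show "inj_on \<alpha> V1" unfolding A(1) using \<alpha> A(2) B(2) by (auto simp: inj_on_def)
    show "\<alpha> ` V1 = V2" unfolding A(1) B(1) using \<alpha> by simp
  qed
  moreover have "bij_betw \<beta> E1 E2"
  proof (rule bij_betw_imageI)
    show "inj_on \<beta> E1" unfolding A(3) using \<beta> A(4) B(4) by (auto simp: inj_on_def)
    show "\<beta> ` E1 = E2" unfolding A(3) B(3) using \<beta> by simp
  qed
  moreover have "\<forall>e\<in>E1. ends2 (\<beta> e) = \<alpha> ` ends1 e"
    unfolding A(3) using A(5-8) B(5-8) \<alpha> \<beta> by auto
  ultimately show ?thesis unfolding mg_iso_def by blast
qed


lemma tri_from:
  assumes "ends g1 = {w,u1}" "ends g2 = {w,u2}" "ends h = {u1,u2}" "w\<noteq>u1" "w\<noteq>u2" "u1\<noteq>u2"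
    "g1\<noteq>g2" "g1\<noteq>h" "g2\<noteq>h"
  shows "tri ends g1 g2 h"
  using assms unfolding tri_def by auto

lemma paw_exists:
  assumes mg: "multigraph V E ends" and cV: "card V = 4" and t: "tri ends a b c"
    and abc: "a\<in>E" "b\<in>E" "c\<in>E" and dE: "d\<in>E" and dn: "d \<notin> {a,b,c}" and E: "E = {a,b,c,d}"
    and meet: "ends d \<inter> (ends a \<union> ends b \<union> ends c) \<noteq> {}"
    and k: "k \<in> {a,b,c}" and disj: "ends k \<inter> ends d = {}"
  shows "is_paw V E ends"
proof -
  have cards: "card (ends a) = 2" "card (ends b) = 2" "card (ends c) = 2" "card (ends d) = 2"
    using mg abc dE by (auto simp: multigraph_def)
  have subs: "ends a \<subseteq> V" "ends b \<subseteq> V" "ends c \<subseteq> V" "ends d \<subseteq> V"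
    using mg abc dE by (auto simp: multigraph_def)
  obtain p q r where s: "p\<noteq>q" "q\<noteq>r" "r\<noteq>p" "ends a = {p,q}" "ends b = {q,r}" "ends c = {r,p}"
    by (rule tri_shape[OF cards(1-3) t])
  have dd: "a\<noteq>b" "a\<noteq>c" "b\<noteq>c" using t by (auto simp: tri_def)
  have "ends d \<inter> {p,q,r} \<noteq> {}" using meet s(4-6) by auto
  then obtain t0 where t0: "t0 \<in> ends d" "t0 \<in> {p,q,r}" by blast
  obtain s0 where ds: "ends d = {t0,s0}" "s0 \<noteq> t0" using card2_other[OF cards(4) t0(1)] by blast
  have s0n: "s0 \<notin> {p,q,r}"
  proof
    assume s0: "s0 \<in> {p,q,r}"
    have kk: "ends k = {p,q} \<or> ends k = {q,r} \<or> ends k = {r,p}" using k s(4-6) by auto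
    have "ends k \<inter> {t0,s0} \<noteq> {}" using kk t0(2) s0 ds(2) by auto
    then show False using disj ds(1) by simp
  qed
  have sub: "{p,q,r,s0} \<subseteq> V" using subs s ds by auto
  have c4: "card {p,q,r,s0} = 4" using s(1-3) s0n by auto
  have V: "V = {p,q,r,s0}"
    using card_subset_eq[OF _ sub] c4 cV mg by (auto simp: multigraph_def)
  have dl: "distinct [a,b,c,d]" using dd dn by auto
  from t0(2) consider "t0 = p" | "t0 = q" | "t0 = r" by blast
  then show ?thesis
  proof cases
    case 1
    show ?thesis unfolding is_paw_def
      apply (rule exI[of _ p], rule exI[of _ q], rule exI[of _ r], rule exI[of _ s0])
      apply (rule exI[of _ a], rule exI[of _ c], rule exI[of _ b], rule exI[of _ d])
      using V E dl s ds 1 s0n by auto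
  next
    case 2
    show ?thesis unfolding is_paw_def
      apply (rule exI[of _ q], rule exI[of _ p], rule exI[of _ r], rule exI[of _ s0])
      apply (rule exI[of _ a], rule exI[of _ b], rule exI[of _ c], rule exI[of _ d])
      using V E dl s ds 2 s0n by auto
  next
    case 3
    show ?thesis unfolding is_paw_def
      apply (rule exI[of _ r], rule exI[of _ q], rule exI[of _ p], rule exI[of _ s0])
      apply (rule exI[of _ b], rule exI[of _ c], rule exI[of _ a], rule exI[of _ d])
      using V E dl s ds 3 s0n by auto
  qed
qed


lemma outer2:
  assumes cH: "card (ends h) = 2" and wh: "w \<notin> ends h"
    and A: "ends ka = {w,x}" and B: "ends kb = {w,y}" and C: "ends kc = {w,z}"
    and dist: "x\<noteq>y" "y\<noteq>z" "x\<noteq>z"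
    and Q: "\<And>k. k\<in>{ka,kb,kc} \<Longrightarrow> ends h \<inter> ends k \<noteq> {} \<Longrightarrow> \<exists>k2\<in>{ka,kb,kc}. k2 \<noteq> k \<and> ends h \<inter> ends k2 \<noteq> {}"
    and m: "u0 \<in> ends h" "u0 \<in> {x,y,z}"
  shows "ends h \<subseteq> {x,y,z}"
proof -
  have out: "\<exists>ov\<in>{x,y,z}. ov \<in> ends h \<and> ends k = {w,ov}"
    if "k \<in> {ka,kb,kc}" "ends h \<inter> ends k \<noteq> {}" for k
  proof -
    from that(1) consider "k = ka" | "k = kb" | "k = kc" by blast
    then show ?thesis
    proof cases
      case 1 then have "x \<in> ends h" using that(2) A wh by auto
      then show ?thesis using 1 A by blast
    next
      case 2 then have "y \<in> ends h" using that(2) B wh by auto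
      then show ?thesis using 2 B by blast
    next
      case 3 then have "z \<in> ends h" using that(2) C wh by auto
      then show ?thesis using 3 C by blast
    qed
  qed
  have inj: "k = k2" if "k \<in> {ka,kb,kc}" "k2 \<in> {ka,kb,kc}" "ends k = ends k2" for k k2
    using that A B C dist by (auto simp: doubleton_eq_iff)
  obtain k where k: "k \<in> {ka,kb,kc}" "ends k = {w,u0}"
  proof -
    from m(2) consider "u0 = x" | "u0 = y" | "u0 = z" by blast
    then show ?thesis
    proof cases
      case 1 then show ?thesis using that[of ka] A by simp
    next
      case 2 then show ?thesis using that[of kb] B by simp
    next
      case 3 then show ?thesis using that[of kc] C by simp
    qed
  qed
  have "ends h \<inter> ends k \<noteq> {}" using k(2) m(1) by blast
  then obtain k2 where k2: "k2 \<in> {ka,kb,kc}" "k2 \<noteq> k" "ends h \<inter> ends k2 \<noteq> {}" using Q[OF k(1)] by blast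
  obtain ov where ov: "ov \<in> {x,y,z}" "ov \<in> ends h" "ends k2 = {w,ov}" using out[OF k2(1) k2(3)] by blast
  have ou: "ov \<noteq> u0"
  proof
    assume "ov = u0" then have "ends k = ends k2" using k(2) ov(3) by simp
    then show False using inj[OF k(1) k2(1)] k2(2) by simp
  qed
  have "ends h = {u0,ov}" using two_eq[OF cH m(1) ov(2) ou[symmetric]] .
  then show ?thesis using m(2) ov(1) by simp
qed


context iso2
begin

lemma paw_case:
  assumes u1: "unicyclic E1 ends1" and u2: "unicyclic E2 ends2" and conn2: "mg_connected V2 E2 ends2"
    and cV: "card V1 = card V2"
    and abc: "a\<in>E1" "b\<in>E1" "c\<in>E1" and t: "tri ends1 a b c"
    and com: "ends2 (\<phi> a) \<inter> ends2 (\<phi> b) \<inter> ends2 (\<phi> c) \<noteq> {}"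
  shows "is_paw V1 E1 ends1 \<and> is_paw V2 E2 ends2"
proof -
  obtain p q r where s: "p\<noteq>q" "q\<noteq>r" "r\<noteq>p" "ends1 a = {p,q}" "ends1 b = {q,r}" "ends1 c = {r,p}"
    by (rule tri_shape[OF c1[OF abc(1)] c1[OF abc(2)] c1[OF abc(3)] t])
  have dd: "a\<noteq>b" "a\<noteq>c" "b\<noteq>c" using t by (auto simp: tri_def)
  have E2abc: "\<phi> a \<in> E2" "\<phi> b \<in> E2" "\<phi> c \<in> E2" using phi_in abc by auto
  have pd: "\<phi> a \<noteq> \<phi> b" "\<phi> a \<noteq> \<phi> c" "\<phi> b \<noteq> \<phi> c" using dd phi_eq abc by auto
  obtain w where w: "w \<in> ends2 (\<phi> a)" "w \<in> ends2 (\<phi> b)" "w \<in> ends2 (\<phi> c)" using com by blast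
  obtain x where x: "ends2 (\<phi> a) = {w,x}" "x \<noteq> w" using card2_other[OF c2[OF E2abc(1)] w(1)] by blast
  obtain y where y: "ends2 (\<phi> b) = {w,y}" "y \<noteq> w" using card2_other[OF c2[OF E2abc(2)] w(2)] by blast
  obtain z where z: "ends2 (\<phi> c) = {w,z}" "z \<noteq> w" using card2_other[OF c2[OF E2abc(3)] w(3)] by blast
  have ne1: "ends1 a \<noteq> ends1 b" "ends1 a \<noteq> ends1 c" "ends1 b \<noteq> ends1 c"
    using s by (auto simp: doubleton_eq_iff)
  have xy: "x \<noteq> y"
  proof
    assume "x = y" then have "ends2 (\<phi> a) = ends2 (\<phi> b)" using x y by simp
    then show False using par[OF abc(1,2)] ne1(1) by simp
  qed
  have xz: "x \<noteq> z"
  proof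
    assume "x = z" then have "ends2 (\<phi> a) = ends2 (\<phi> c)" using x z by simp
    then show False using par[OF abc(1,3)] ne1(2) by simp
  qed
  have yz: "y \<noteq> z"
  proof
    assume "y = z" then have "ends2 (\<phi> b) = ends2 (\<phi> c)" using y z by simp
    then show False using par[OF abc(2,3)] ne1(3) by simp
  qed
  define T' where "T' = {\<phi> a, \<phi> b, \<phi> c}"
  have T'E: "T' \<subseteq> E2" using E2abc T'_def by auto
  have noW: "h' \<in> T'" if hw: "h' \<in> E2" "w \<in> ends2 h'" for h'
  proof (rule ccontr)
    assume hn: "h' \<notin> T'"
    define h where "h = psi h'"
    have hE: "h \<in> E1" unfolding h_def by (rule psi_in[OF hw(1)])
    have hh: "\<phi> h = h'" unfolding h_def by (rule phi_psi[OF hw(1)])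
    have hn1: "h \<notin> {a,b,c}" using hn hh T'_def by auto
    have "ends1 h \<inter> ends1 a \<noteq> {}" using adjI'[OF hE abc(1), of w] hh hw(2) w(1) by simp
    moreover have "ends1 h \<inter> ends1 b \<noteq> {}" using adjI'[OF hE abc(2), of w] hh hw(2) w(2) by simp
    moreover have "ends1 h \<inter> ends1 c \<noteq> {}" using adjI'[OF hE abc(3), of w] hh hw(2) w(3) by simp
    ultimately show False by (rule tri_no_adj3[OF mg1 u1 abc t hE hn1])
  qed
  have Q: "\<exists>k2\<in>T'. k2 \<noteq> k \<and> ends2 h' \<inter> ends2 k2 \<noteq> {}"
    if hk: "h' \<in> E2" "k \<in> T'" "ends2 h' \<inter> ends2 k \<noteq> {}" for h' k
  proof -
    define h where "h = psi h'"
    have hE: "h \<in> E1" unfolding h_def by (rule psi_in[OF hk(1)])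
    have hh: "\<phi> h = h'" unfolding h_def by (rule phi_psi[OF hk(1)])
    obtain k0 where k0: "k0 \<in> {a,b,c}" "\<phi> k0 = k" using hk(2) T'_def by auto
    have k0E: "k0 \<in> E1" using k0(1) abc by auto
    have "ends1 h \<inter> ends1 k0 \<noteq> {}" using adj[OF hE k0E] hh k0(2) hk(3) by simp
    then obtain k2 where k2: "k2 \<in> {a,b,c}" "k2 \<noteq> k0" "ends1 h \<inter> ends1 k2 \<noteq> {}"
      using tri_adj_other[OF c1[OF abc(1)] c1[OF abc(2)] c1[OF abc(3)] t k0(1)] by blast
    have k2E: "k2 \<in> E1" using k2(1) abc by auto
    have "\<phi> k2 \<in> T'" using k2(1) T'_def by auto
    moreover have "\<phi> k2 \<noteq> k" using k2(2) k0(2) phi_eq[OF k2E k0E] by simp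
    moreover have "ends2 h' \<inter> ends2 (\<phi> k2) \<noteq> {}" using adj[OF hE k2E] hh k2(3) by simp
    ultimately show ?thesis by blast
  qed
  have inner: "ends2 h' \<subseteq> {x,y,z}"
    if hh: "h' \<in> E2" "h' \<notin> T'" "u0 \<in> ends2 h'" "u0 \<in> {x,y,z}" for h' u0
  proof -
    have wh: "w \<notin> ends2 h'" using noW[OF hh(1)] hh(2) by blast
    show ?thesis
      by (rule outer2[where ends=ends2 and h=h' and ka="\<phi> a" and kb="\<phi> b" and kc="\<phi> c", OF c2[OF hh(1)] wh x(1) y(1) z(1) xy yz xz _ hh(3,4)])
         (use Q[OF hh(1)] T'_def in simp)
  qed
  have wV: "w \<in> V2" using sub2[OF E2abc(1)] w(1) by blast
  have V2eq: "V2 = {w,x,y,z}"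
  proof
    show "V2 \<subseteq> {w,x,y,z}"
    proof (rule closed_reach[OF conn2 wV])
      show "w \<in> {w,x,y,z}" by simp
    next
      fix e assume e: "e \<in> E2" "ends2 e \<inter> {w,x,y,z} \<noteq> {}"
      show "ends2 e \<subseteq> {w,x,y,z}"
      proof (cases "e \<in> T'")
        case True then show ?thesis using x y z T'_def by auto
      next
        case False
        then have "w \<notin> ends2 e" using noW e(1) by blast
        then obtain u0 where "u0 \<in> ends2 e" "u0 \<in> {x,y,z}" using e(2) by blast
        then show ?thesis using inner[OF e(1) False] by blast
      qed
    qed
    show "{w,x,y,z} \<subseteq> V2" using sub2[OF E2abc(1)] sub2[OF E2abc(2)] sub2[OF E2abc(3)] x y z by auto
  qed
  have c4: "card V2 = 4" using V2eq x(2) y(2) z(2) xy xz yz by auto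
  have outside: "ends2 h \<subseteq> {x,y,z}" if "h \<in> E2" "h \<notin> T'" for h
  proof -
    have "w \<notin> ends2 h" using noW that by blast
    moreover have "ends2 h \<subseteq> {w,x,y,z}" using sub2[OF that(1)] V2eq by simp
    ultimately show ?thesis by blast
  qed
  have edge_of: "\<exists>g\<in>T'. ends2 g = {w,ov}" if "ov \<in> {x,y,z}" for ov
    using that x y z T'_def by auto
  have exd: "\<exists>d'\<in>E2. d' \<notin> T'"
  proof (rule ccontr)
    assume "\<not> ?thesis" then have allT: "E2 \<subseteq> T'" by blast
    obtain C where C: "mg_cycle E2 ends2 C" using u2 unfolding unicyclic_def by blast
    then have CE: "C \<subseteq> E2" "C \<noteq> {}" by (auto simp: mg_cycle_def)
    then obtain k where k: "k \<in> C" by blast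
    have CT: "C \<subseteq> T'" using CE allT by blast
    have kT: "k \<in> T'" using k CT by blast
    then consider "k = \<phi> a" | "k = \<phi> b" | "k = \<phi> c" using T'_def by blast
    then show False
    proof cases
      case 1
      show False
      proof (rule cycle_private[OF C k])
        show "x \<in> ends2 k" using 1 x by simp
        fix g assume g: "g \<in> C" "x \<in> ends2 g"
        have "g \<in> T'" using g(1) CT by blast
        then show "g = k" using g(2) 1 y z x(2) xy xz T'_def by auto
      qed
    next
      case 2
      show False
      proof (rule cycle_private[OF C k])
        show "y \<in> ends2 k" using 2 y by simp
        fix g assume g: "g \<in> C" "y \<in> ends2 g"
        have "g \<in> T'" using g(1) CT by blast
        then show "g = k" using g(2) 2 x z y(2) xy yz T'_def by auto
      qed
    next
      case 3
      show False
      proof (rule cycle_private[OF C k])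
        show "z \<in> ends2 k" using 3 z by simp
        fix g assume g: "g \<in> C" "z \<in> ends2 g"
        have "g \<in> T'" using g(1) CT by blast
        then show "g = k" using g(2) 3 x y z(2) xz yz T'_def by auto
      qed
    qed
  qed
  then obtain d' where d': "d' \<in> E2" "d' \<notin> T'" by blast
  have wxyz: "w \<notin> {x,y,z}" using x(2) y(2) z(2) by auto
  have tri_out: "\<exists>g1 g2 u1 u2. g1 \<in> T' \<and> g2 \<in> T' \<and> ends2 g1 = {w,u1} \<and> ends2 g2 = {w,u2} \<and>
      ends2 h = {u1,u2} \<and> u1 \<noteq> u2 \<and> u1 \<in> {x,y,z} \<and> u2 \<in> {x,y,z} \<and> tri ends2 g1 g2 h"
    if hh: "h \<in> E2" "h \<notin> T'" for h
  proof -
    obtain u1 u2 where u: "ends2 h = {u1,u2}" "u1 \<noteq> u2" using c2[OF hh(1)] by (auto simp: card_2_iff)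
    have uin: "u1 \<in> {x,y,z}" "u2 \<in> {x,y,z}" using outside[OF hh] u(1) by auto
    obtain g1 where g1: "g1 \<in> T'" "ends2 g1 = {w,u1}" using edge_of[OF uin(1)] by blast
    obtain g2 where g2: "g2 \<in> T'" "ends2 g2 = {w,u2}" using edge_of[OF uin(2)] by blast
    have wu: "w \<noteq> u1" "w \<noteq> u2" using uin wxyz by auto
    have g12: "g1 \<noteq> g2" using g1(2) g2(2) u(2) by (auto simp: doubleton_eq_iff)
    have "g1 \<noteq> h" "g2 \<noteq> h" using g1(1) g2(1) hh(2) by auto
    then have "tri ends2 g1 g2 h" using tri_from[OF g1(2) g2(2) u(1) wu u(2) g12] by blast
    then show ?thesis using g1 g2 u uin by blast
  qed
  have uniq: "h = d'" if hh: "h \<in> E2" "h \<notin> T'" for h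
  proof (rule ccontr)
    assume hd: "h \<noteq> d'"
    obtain g1 g2 where G: "g1 \<in> T'" "g2 \<in> T'" "tri ends2 g1 g2 d'" using tri_out[OF d'] by blast
    obtain g1' g2' where G': "g1' \<in> T'" "g2' \<in> T'" "tri ends2 g1' g2' h" using tri_out[OF hh] by blast
    have C1: "mg_cycle E2 ends2 {g1,g2,d'}" using tri_cycle[OF mg2 _ _ d'(1) G(3)] G(1,2) T'E by blast
    have C2: "mg_cycle E2 ends2 {g1',g2',h}" using tri_cycle[OF mg2 _ _ hh(1) G'(3)] G'(1,2) T'E by blast
    have "{g1',g2',h} = {g1,g2,d'}" using uni_two[OF u2 C2 C1] .
    then have "h \<in> {g1,g2,d'}" by blast
    then show False using G(1,2) hh(2) hd by auto
  qed
  have E2eq: "E2 = {\<phi> a, \<phi> b, \<phi> c, d'}"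
  proof
    show "E2 \<subseteq> {\<phi> a, \<phi> b, \<phi> c, d'}"
    proof
      fix e assume e: "e \<in> E2"
      show "e \<in> {\<phi> a, \<phi> b, \<phi> c, d'}"
      proof (cases "e \<in> T'")
        case True then show ?thesis using T'_def by auto
      next
        case False then show ?thesis using uniq[OF e False] by simp
      qed
    qed
    show "{\<phi> a, \<phi> b, \<phi> c, d'} \<subseteq> E2" using E2abc d'(1) by auto
  qed
  obtain g1 g2 u1 u2 where G: "g1 \<in> T'" "g2 \<in> T'" "ends2 g1 = {w,u1}" "ends2 g2 = {w,u2}"
      "ends2 d' = {u1,u2}" "u1 \<noteq> u2" "u1 \<in> {x,y,z}" "u2 \<in> {x,y,z}" "tri ends2 g1 g2 d'"
    using tri_out[OF d'] by blast
  obtain u3 where u3: "u3 \<in> {x,y,z}" "u3 \<noteq> u1" "u3 \<noteq> u2"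
  proof -
    have "\<exists>u3\<in>{x,y,z}. u3 \<noteq> u1 \<and> u3 \<noteq> u2" using G(7,8) xy xz yz by auto
    then show ?thesis using that by blast
  qed
  obtain g3 where g3: "g3 \<in> T'" "ends2 g3 = {w,u3}" using edge_of[OF u3(1)] by blast
  have wu: "w \<noteq> u1" "w \<noteq> u2" "w \<noteq> u3" using G(7,8) u3(1) wxyz by auto
  have g3d: "g3 \<noteq> g1" "g3 \<noteq> g2" using g3(2) G(3,4) u3(2,3) by (auto simp: doubleton_eq_iff)
  have g12: "g1 \<noteq> g2" using G(9) by (simp add: tri_def)
  have Tsub: "{g1,g2,g3} \<subseteq> T'" using G(1,2) g3(1) by blast
  have cT: "card T' = 3" using pd T'_def by simp
  have cg: "card {g1,g2,g3} = 3" using g3d g12 by simp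
  have Teq: "{g1,g2,g3} = T'" using card_subset_eq[OF _ Tsub] cT cg T'_def by simp
  have E2eq': "E2 = {g1,g2,d',g3}" using E2eq Teq T'_def by auto
  have g3n: "g3 \<notin> {g1,g2,d'}" using g3d g3(1) d'(2) by auto
  have inE2: "g1 \<in> E2" "g2 \<in> E2" "g3 \<in> E2" using G(1,2) g3(1) T'E by auto
  have meet2: "ends2 g3 \<inter> (ends2 g1 \<union> ends2 g2 \<union> ends2 d') \<noteq> {}" using g3(2) G(3) by auto
  have disj2: "ends2 d' \<inter> ends2 g3 = {}" using G(5) g3(2) u3(2,3) wu by auto
  have paw2: "is_paw V2 E2 ends2"
    by (rule paw_exists[OF mg2 c4 G(9) inE2(1,2) d'(1) inE2(3) g3n E2eq' meet2 _ disj2]) simp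
  define d where "d = psi d'"
  have dE: "d \<in> E1" unfolding d_def by (rule psi_in[OF d'(1)])
  have dd': "\<phi> d = d'" unfolding d_def by (rule phi_psi[OF d'(1)])
  have dn: "d \<notin> {a,b,c}" using dd' d'(2) T'_def by auto
  have "E1 = psi ` E2" using bij_betw_imp_surj_on[OF psi_bij] by simp
  also have "\<dots> = {a,b,c,d}" using E2eq psi_phi abc d_def by simp
  finally have E1eq: "E1 = {a,b,c,d}" .
  have psiT: "psi g \<in> {a,b,c}" "\<phi> (psi g) = g" if "g \<in> T'" for g
    using that psi_phi abc phi_psi T'E T'_def by auto
  have g1E: "psi g1 \<in> E1" using psiT(1)[OF G(1)] abc by auto
  have g3E: "psi g3 \<in> E1" using psiT(1)[OF g3(1)] abc by auto
  have "ends1 d \<inter> ends1 (psi g1) \<noteq> {}"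
    using adjI'[OF dE g1E, of u1] dd' psiT(2)[OF G(1)] G(3,5) by simp
  then have meet1: "ends1 d \<inter> (ends1 a \<union> ends1 b \<union> ends1 c) \<noteq> {}" using psiT(1)[OF G(1)] by auto
  have disj1: "ends1 (psi g3) \<inter> ends1 d = {}"
  proof (rule ccontr)
    assume "ends1 (psi g3) \<inter> ends1 d \<noteq> {}"
    then have "ends2 (\<phi> (psi g3)) \<inter> ends2 (\<phi> d) \<noteq> {}" using adj[OF g3E dE] by simp
    then show False using psiT(2)[OF g3(1)] dd' disj2 by auto
  qed
  have c41: "card V1 = 4" using cV c4 by simp
  have paw1: "is_paw V1 E1 ends1"
    by (rule paw_exists[OF mg1 c41 t abc dE dn E1eq meet1 psiT(1)[OF g3(1)] disj1])
  show ?thesis using paw1 paw2 by blast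
qed

end



lemma adj_char:
  assumes mg: "multigraph V E ends" and ef: "e\<in>E" "f\<in>E" "e\<noteq>f"
  shows "(ends e \<inter> ends f \<noteq> {}) = (dual_solid E ends e f \<or> dual_dotted E ends e f)"
proof -
  have cy: "mg_cycle E ends {e,f} = (ends e = ends f)" by (rule cycle2_iff[OF mg ef])
  have ne: "ends e \<noteq> {}" using mg ef(1) by (auto simp: multigraph_def)
  show ?thesis unfolding dual_solid_def dual_dotted_def cy using ef ne by auto
qed

lemma par_char:
  assumes mg: "multigraph V E ends" and ef: "e\<in>E" "f\<in>E" "e\<noteq>f"
  shows "(ends e = ends f) = dual_dotted E ends e f"
  unfolding dual_dotted_def using cycle2_iff[OF mg ef] ef by auto

lemma to_iso2:
  assumes mg1: "multigraph V1 E1 ends1" and mg2: "multigraph V2 E2 ends2"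
    and bij: "bij_betw \<phi> E1 E2"
    and pres: "\<forall>e\<in>E1. \<forall>f\<in>E1.
        (dual_solid E1 ends1 e f \<longleftrightarrow> dual_solid E2 ends2 (\<phi> e) (\<phi> f)) \<and>
        (dual_dotted E1 ends1 e f \<longleftrightarrow> dual_dotted E2 ends2 (\<phi> e) (\<phi> f))"
  shows "iso2 V1 E1 ends1 V2 E2 ends2 \<phi>"
proof
  show "multigraph V1 E1 ends1" "multigraph V2 E2 ends2" "bij_betw \<phi> E1 E2" by fact+
  fix e f assume ef: "e\<in>E1" "f\<in>E1"
  have pe: "\<phi> e \<in> E2" "\<phi> f \<in> E2" using bij ef bij_betw_apply by (metis)+
  have ne1: "ends1 e \<noteq> {}" using mg1 ef(1) by (auto simp: multigraph_def)
  have ne2: "ends2 (\<phi> e) \<noteq> {}" using mg2 pe(1) by (auto simp: multigraph_def)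
  show "(ends1 e \<inter> ends1 f \<noteq> {}) = (ends2 (\<phi> e) \<inter> ends2 (\<phi> f) \<noteq> {})"
  proof (cases "e = f")
    case True then show ?thesis using ne1 ne2 by simp
  next
    case False
    then have "\<phi> e \<noteq> \<phi> f" using bij ef by (metis bij_betw_imp_inj_on inj_on_eq_iff)
    then show ?thesis using adj_char[OF mg1 ef False] adj_char[OF mg2 pe] pres ef by simp
  qed
  show "(ends1 e = ends1 f) = (ends2 (\<phi> e) = ends2 (\<phi> f))"
  proof (cases "e = f")
    case True then show ?thesis by simp
  next
    case False
    then have "\<phi> e \<noteq> \<phi> f" using bij ef by (metis bij_betw_imp_inj_on inj_on_eq_iff)
    then show ?thesis using par_char[OF mg1 ef False] par_char[OF mg2 pe] pres ef by simp
  qed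
qed

lemma uni_nopar3:
  assumes "multigraph V E ends" "unicyclic E ends" shows "nopar3 E ends"
  unfolding nopar3_def using no3par[OF assms] by blast

lemma card_ge2:
  assumes mg: "multigraph V E ends" and u: "unicyclic E ends"
  shows "2 \<le> card V"
proof -
  obtain C where C: "mg_cycle E ends C" using u unfolding unicyclic_def by blast
  then obtain e where e: "e \<in> E" using C by (auto simp: mg_cycle_def)
  have "ends e \<subseteq> V" "card (ends e) = 2" "finite V" using mg e by (auto simp: multigraph_def)
  then show ?thesis by (metis card_mono)
qed

lemma card2_case:
  assumes mg1: "multigraph V1 E1 ends1" and mg2: "multigraph V2 E2 ends2"
    and bij: "bij_betw \<phi> E1 E2" and c1: "card V1 = 2" and c2: "card V2 = 2"
  shows "mg_iso V1 E1 ends1 V2 E2 ends2"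
proof -
  have f1: "finite V1" and f2: "finite V2" using mg1 mg2 by (auto simp: multigraph_def)
  obtain \<alpha> where \<alpha>: "bij_betw \<alpha> V1 V2" using finite_same_card_bij[OF f1 f2] c1 c2 by auto
  have all1: "ends1 e = V1" if "e \<in> E1" for e
    using card_subset_eq[OF f1] mg1 that c1 by (auto simp: multigraph_def)
  have all2: "ends2 e = V2" if "e \<in> E2" for e
    using card_subset_eq[OF f2] mg2 that c2 by (auto simp: multigraph_def)
  have "\<forall>e\<in>E1. ends2 (\<phi> e) = \<alpha> ` ends1 e"
  proof
    fix e assume e: "e \<in> E1"
    have "\<phi> e \<in> E2" using bij e bij_betw_apply by metis
    then show "ends2 (\<phi> e) = \<alpha> ` ends1 e" using all1[OF e] all2 bij_betw_imp_surj_on[OF \<alpha>] by simp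
  qed
  then show ?thesis unfolding mg_iso_def using \<alpha> bij by blast
qed

context iso2
begin

lemma good_case:
  assumes good: "good E1 ends1 ends2 \<phi>" and np1: "nopar3 E1 ends1" and np2: "nopar3 E2 ends2"
    and conn1: "mg_connected V1 E1 ends1" and c3: "3 \<le> card V1" and cV: "card V1 = card V2"
  shows "mg_iso V1 E1 ends1 V2 E2 ends2"
proof -
  have ex: "\<exists>w. w\<in>V2 \<and> \<phi> ` star E1 ends1 v = star E2 ends2 w" if v: "v \<in> V1" for v
  proof -
    have "star E1 ends1 v \<noteq> {}" using star_nonempty[OF conn1 v] c3 by simp
    then show ?thesis using star_image[OF good np1 np2] by blast
  qed
  define \<alpha> where "\<alpha> v = (SOME w. w\<in>V2 \<and> \<phi> ` star E1 ends1 v = star E2 ends2 w)" for v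
  have \<alpha>: "\<alpha> v \<in> V2" "\<phi> ` star E1 ends1 v = star E2 ends2 (\<alpha> v)" if "v \<in> V1" for v
    using someI_ex[OF ex[OF that]] unfolding \<alpha>_def by blast+
  have injphi: "inj_on \<phi> E1" using bij by (rule bij_betw_imp_inj_on)
  have inj: "inj_on \<alpha> V1"
  proof (rule inj_onI)
    fix v v' assume vv: "v \<in> V1" "v' \<in> V1" "\<alpha> v = \<alpha> v'"
    have "\<phi> ` star E1 ends1 v = \<phi> ` star E1 ends1 v'" using \<alpha>(2)[OF vv(1)] \<alpha>(2)[OF vv(2)] vv(3) by simp
    then have "star E1 ends1 v = star E1 ends1 v'"
      using inj_on_image_eq_iff[OF injphi] by (auto simp: star_def)
    then show "v = v'" using star_inj[OF mg1 conn1 c3 vv(1,2)] by blast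
  qed
  have fin2: "finite V2" using mg2 by (simp add: multigraph_def)
  have "\<alpha> ` V1 \<subseteq> V2" using \<alpha>(1) by blast
  moreover have "card (\<alpha> ` V1) = card V2" using card_image[OF inj] cV by simp
  ultimately have img: "\<alpha> ` V1 = V2" using card_subset_eq[OF fin2] by blast
  have bij\<alpha>: "bij_betw \<alpha> V1 V2" using inj img by (rule bij_betw_imageI)
  have "\<forall>e\<in>E1. ends2 (\<phi> e) = \<alpha> ` ends1 e"
  proof
    fix e assume e: "e \<in> E1"
    obtain u v where uv: "ends1 e = {u,v}" "u \<noteq> v" using c1[OF e] by (auto simp: card_2_iff)
    have uvV: "u \<in> V1" "v \<in> V1" using sub1[OF e] uv(1) by auto
    have "e \<in> star E1 ends1 u" "e \<in> star E1 ends1 v" using e uv(1) by (auto simp: star_def)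
    then have "\<phi> e \<in> star E2 ends2 (\<alpha> u)" "\<phi> e \<in> star E2 ends2 (\<alpha> v)"
      using \<alpha>(2)[OF uvV(1)] \<alpha>(2)[OF uvV(2)] by blast+
    then have m: "\<alpha> u \<in> ends2 (\<phi> e)" "\<alpha> v \<in> ends2 (\<phi> e)" by (auto simp: star_def)
    have "\<alpha> u \<noteq> \<alpha> v" using inj uvV uv(2) by (auto simp: inj_on_def)
    then have "ends2 (\<phi> e) = {\<alpha> u, \<alpha> v}" using two_eq[OF c2[OF phi_in[OF e]] m] by blast
    then show "ends2 (\<phi> e) = \<alpha> ` ends1 e" using uv(1) by simp
  qed
  then show ?thesis unfolding mg_iso_def using bij\<alpha> bij by blast
qed

lemma bad_case:
  assumes ng: "\<not> good E1 ends1 ends2 \<phi>"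
    and u1: "unicyclic E1 ends1" and u2: "unicyclic E2 ends2"
    and conn1: "mg_connected V1 E1 ends1" and conn2: "mg_connected V2 E2 ends2"
    and cV: "card V1 = card V2"
  shows "mg_iso V1 E1 ends1 V2 E2 ends2"
proof -
  obtain e f g where efg: "e\<in>E1" "f\<in>E1" "g\<in>E1" "e\<noteq>f" "e\<noteq>g" "f\<noteq>g"
    "ends1 e \<inter> ends1 f \<noteq> {}" "ends1 e \<inter> ends1 g \<noteq> {}" "ends1 f \<inter> ends1 g \<noteq> {}"
    and diff: "(ends1 e \<inter> ends1 f \<inter> ends1 g \<noteq> {}) \<noteq> (ends2 (\<phi> e) \<inter> ends2 (\<phi> f) \<inter> ends2 (\<phi> g) \<noteq> {})"
    using ng unfolding good_def by blast
  have paws: "is_paw V1 E1 ends1 \<and> is_paw V2 E2 ends2"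
  proof (cases "ends1 e \<inter> ends1 f \<inter> ends1 g = {}")
    case True
    then have t: "tri ends1 e f g" using efg unfolding tri_def by blast
    have "ends2 (\<phi> e) \<inter> ends2 (\<phi> f) \<inter> ends2 (\<phi> g) \<noteq> {}" using diff True by blast
    then show ?thesis by (rule paw_case[OF u1 u2 conn2 cV efg(1-3) t])
  next
    case False
    then have c2e: "ends2 (\<phi> e) \<inter> ends2 (\<phi> f) \<inter> ends2 (\<phi> g) = {}" using diff by blast
    have pE: "\<phi> e \<in> E2" "\<phi> f \<in> E2" "\<phi> g \<in> E2" using phi_in efg by auto
    have pd: "\<phi> e \<noteq> \<phi> f" "\<phi> e \<noteq> \<phi> g" "\<phi> f \<noteq> \<phi> g" using phi_eq efg by auto
    have pa: "ends2 (\<phi> e) \<inter> ends2 (\<phi> f) \<noteq> {}" "ends2 (\<phi> e) \<inter> ends2 (\<phi> g) \<noteq> {}"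
      "ends2 (\<phi> f) \<inter> ends2 (\<phi> g) \<noteq> {}" using adj efg by auto
    have t: "tri ends2 (\<phi> e) (\<phi> f) (\<phi> g)" using pd pa c2e unfolding tri_def by blast
    have "ends1 (psi (\<phi> e)) \<inter> ends1 (psi (\<phi> f)) \<inter> ends1 (psi (\<phi> g)) \<noteq> {}"
      using False psi_phi efg by simp
    then have "is_paw V2 E2 ends2 \<and> is_paw V1 E1 ends1"
      by (rule iso2.paw_case[OF sym u2 u1 conn1 cV[symmetric] pE t])
    then show ?thesis by blast
  qed
  then show ?thesis using paw_iso by blast
qed

end

theorem lemma6:
  fixes V1 :: "'v set" and E1 :: "'e set" and ends1 :: "'e \<Rightarrow> 'v set"
    and V2 :: "'w set" and E2 :: "'f set" and ends2 :: "'f \<Rightarrow> 'w set"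
    and n :: nat
  assumes "multigraph V1 E1 ends1" and "mg_connected V1 E1 ends1"
    and "unicyclic E1 ends1" and "card V1 = n"
    and "multigraph V2 E2 ends2" and "mg_connected V2 E2 ends2"
    and "unicyclic E2 ends2" and "card V2 = n"
    and "dual_iso E1 ends1 E2 ends2"
  shows "mg_iso V1 E1 ends1 V2 E2 ends2"
proof -
  obtain \<phi> where bij: "bij_betw \<phi> E1 E2" and pres: "\<forall>e\<in>E1. \<forall>f\<in>E1.
        (dual_solid E1 ends1 e f \<longleftrightarrow> dual_solid E2 ends2 (\<phi> e) (\<phi> f)) \<and>
        (dual_dotted E1 ends1 e f \<longleftrightarrow> dual_dotted E2 ends2 (\<phi> e) (\<phi> f))"
    using assms(9) unfolding dual_iso_def by blast
  interpret I: iso2 V1 E1 ends1 V2 E2 ends2 \<phi> by (rule to_iso2[OF assms(1,5) bij pres])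
  have cV: "card V1 = card V2" using assms(4,8) by simp
  have ge2: "2 \<le> card V1" by (rule card_ge2[OF assms(1,3)])
  show ?thesis
  proof (cases "card V1 = 2")
    case True
    then show ?thesis using card2_case[OF assms(1,5) bij] cV by simp
  next
    case False
    then have c3: "3 \<le> card V1" using ge2 by simp
    show ?thesis
    proof (cases "good E1 ends1 ends2 \<phi>")
      case True
      show ?thesis by (rule I.good_case[OF True uni_nopar3[OF assms(1,3)] uni_nopar3[OF assms(5,7)] assms(2) c3 cV])
    next
      case False
      show ?thesis by (rule I.bad_case[OF False assms(3,7,2,6) cV])
    qed
  qed
qed


end
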